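(* Suppose $T$ has the f.s. dichotomy, $M\preceq\mathbb{C}$ is small, and $\langle A_i:i\in I\rangle$ is an $M$-f.s. sequence. Then for every $c\in\mathbb{C}$ there is a simple extension $\langle A'_j:j\in J\rangle$ of $\langle A_i:i\in I\rangle$ which is an $M$-f.s. sequence and has $c\in\bigcup_jA'_j$. Moreover, if $(I,\le)$ is a well-ordering with a maximum element, one may take $J=I$.
   Context: Work in a monster model $\mathbb{C}$ of $T$. For $B\supseteq M$, $\mathrm{tp}(A/B)$ is finitely satisfied in $M$ if each of its formulas is satisfied by a tuple from $M$. $T$ has the f.s. dichotomy if for every small model $M$ and finite tuples $\bar a,\bar b$ with $\mathrm{tp}(\bar b/M\bar a)$ finitely satisfied in $M$, for every singleton $c$ either $\mathrm{tp}(\bar b/M\bar ac)$ or $\mathrm{tp}(\bar bc/M\bar a)$ is finitely satisfied in $M$. For a sequence of sets $\langle A_i:i\in I\rangle$, $A_{<i}=\bigcup_{j<i}A_j$. An $M$-f.s. sequence is a sequence of sets $\langle A_i:i\in I\rangle$ such that $\mathrm{tp}(A_i/A_{<i}M)$ is finitely satisfied in $M$ for every $i$. A sequence $\langle A'_j:j\in J\rangle$ is a simple extension of $\langle A_i:i\in I\rangle$ if $I\subseteq J$ and $A_i\subseteq A'_i$ for all $i\in I$ (i.e. $\langle A_i\rangle$ is obtained from it by passing to a subsequence and shrinking the sets). *)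

theory Defs
  imports Main
begin

datatype 'r fm = Eq nat nat | Rel 'r "nat list" | Neg "'r fm" | Conj "'r fm" "'r fm" | Ex nat "'r fm"

primrec sat_in :: "'a set \<Rightarrow> ('r \<Rightarrow> 'a list set) \<Rightarrow> (nat \<Rightarrow> 'a) \<Rightarrow> 'r fm \<Rightarrow> bool" where
  "sat_in S Irel e (Eq x y) = (e x = e y)"
| "sat_in S Irel e (Rel r xs) = (map e xs \<in> Irel r)"
| "sat_in S Irel e (Neg \<phi>) = (\<not> sat_in S Irel e \<phi>)"
| "sat_in S Irel e (Conj \<phi> \<psi>) = (sat_in S Irel e \<phi> \<and> sat_in S Irel e \<psi>)"
| "sat_in S Irel e (Ex n \<phi>) = (\<exists>a\<in>S. sat_in S Irel (e(n := a)) \<phi>)"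

text \<open>The monster model has universe UNIV :: 'a set.\<close>

abbreviation sat :: "('r \<Rightarrow> 'a list set) \<Rightarrow> (nat \<Rightarrow> 'a) \<Rightarrow> 'r fm \<Rightarrow> bool" where
  "sat Irel e \<phi> \<equiv> sat_in UNIV Irel e \<phi>"

definition elem_sub :: "('r \<Rightarrow> 'a list set) \<Rightarrow> 'a set \<Rightarrow> bool" where
  "elem_sub Irel M \<longleftrightarrow> M \<noteq> {} \<and>
     (\<forall>\<phi> e. (\<forall>v. e v \<in> M) \<longrightarrow> (sat_in M Irel e \<phi> \<longleftrightarrow> sat Irel e \<phi>))"

definition small :: "'k set \<Rightarrow> 'a set \<Rightarrow> bool" where
  "small K X \<longleftrightarrow> (card_of X, card_of K) \<in> ordLess"

text \<open>|K|-saturation: every finitely satisfiable set of formulas in variable 0 with parameters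
  from a small set B is realized.\<close>

definition saturated :: "('r \<Rightarrow> 'a list set) \<Rightarrow> 'k set \<Rightarrow> bool" where
  "saturated Irel K \<longleftrightarrow>
    (\<forall>(B::'a set) (p::('r fm \<times> (nat \<Rightarrow> 'a)) set).
       small K B \<and> (\<forall>(\<phi>, e)\<in>p. \<forall>v. v \<noteq> 0 \<longrightarrow> e v \<in> B) \<and>
       (\<forall>q. finite q \<and> q \<subseteq> p \<longrightarrow> (\<exists>a. \<forall>(\<phi>, e)\<in>q. sat Irel (e(0 := a)) \<phi>))
       \<longrightarrow> (\<exists>a. \<forall>(\<phi>, e)\<in>p. sat Irel (e(0 := a)) \<phi>))"

definition homogeneous :: "('r \<Rightarrow> 'a list set) \<Rightarrow> 'k set \<Rightarrow> bool" where
  "homogeneous Irel K \<longleftrightarrow>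
    (\<forall>(D::'a set) (f::'a \<Rightarrow> 'a).
       small K D \<and> (\<forall>\<phi> e. (\<forall>v. e v \<in> D) \<longrightarrow> (sat Irel e \<phi> \<longleftrightarrow> sat Irel (f \<circ> e) \<phi>))
       \<longrightarrow> (\<exists>\<sigma>. bij \<sigma> \<and> (\<forall>r xs. xs \<in> Irel r \<longleftrightarrow> map \<sigma> xs \<in> Irel r) \<and> (\<forall>d\<in>D. \<sigma> d = f d)))"

definition monster :: "('r \<Rightarrow> 'a list set) \<Rightarrow> 'k set \<Rightarrow> bool" where
  "monster Irel K \<longleftrightarrow> infinite K \<and> (card_of (UNIV :: 'r fm set), card_of K) \<in> ordLess \<and>
     saturated Irel K \<and> homogeneous Irel K"

text \<open>tp(A/B) is finitely satisfied in M: whenever a formula holds of a finite tuple from A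
  (variables xs) with parameters from B (all other variables), it holds of some tuple from M
  with the same parameters.\<close>

definition fs :: "('r \<Rightarrow> 'a list set) \<Rightarrow> 'a set \<Rightarrow> 'a set \<Rightarrow> 'a set \<Rightarrow> bool" where
  "fs Irel A B M \<longleftrightarrow>
    (\<forall>\<phi> (xs::nat list) e. (\<forall>v\<in>set xs. e v \<in> A) \<and> (\<forall>v. v \<notin> set xs \<longrightarrow> e v \<in> B) \<and> sat Irel e \<phi>
       \<longrightarrow> (\<exists>e'. (\<forall>v\<in>set xs. e' v \<in> M) \<and> (\<forall>v. v \<notin> set xs \<longrightarrow> e' v = e v) \<and> sat Irel e' \<phi>))"

definition fs_dichotomy :: "('r \<Rightarrow> 'a list set) \<Rightarrow> 'k set \<Rightarrow> bool" where
  "fs_dichotomy Irel K \<longleftrightarrow>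
    (\<forall>M (as::'a list) (bs::'a list) (c::'a).
       elem_sub Irel M \<and> small K M \<and> fs Irel (set bs) (M \<union> set as) M
       \<longrightarrow> fs Irel (set bs) (M \<union> set as \<union> {c}) M \<or> fs Irel (set bs \<union> {c}) (M \<union> set as) M)"

definition strict_linear_on :: "'i set \<Rightarrow> ('i \<Rightarrow> 'i \<Rightarrow> bool) \<Rightarrow> bool" where
  "strict_linear_on I lt \<longleftrightarrow> (\<forall>i\<in>I. \<not> lt i i) \<and>
     (\<forall>i\<in>I. \<forall>j\<in>I. \<forall>k\<in>I. lt i j \<and> lt j k \<longrightarrow> lt i k) \<and>
     (\<forall>i\<in>I. \<forall>j\<in>I. lt i j \<or> i = j \<or> lt j i)"

definition well_order_with_max :: "'i set \<Rightarrow> ('i \<Rightarrow> 'i \<Rightarrow> bool) \<Rightarrow> bool" where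
  "well_order_with_max I lt \<longleftrightarrow>
     (\<forall>S. S \<subseteq> I \<and> S \<noteq> {} \<longrightarrow> (\<exists>m\<in>S. \<forall>s\<in>S. \<not> lt s m)) \<and>
     (\<exists>m\<in>I. \<forall>i\<in>I. i \<noteq> m \<longrightarrow> lt i m)"

definition below :: "'i set \<Rightarrow> ('i \<Rightarrow> 'i \<Rightarrow> bool) \<Rightarrow> ('i \<Rightarrow> 'a set) \<Rightarrow> 'i \<Rightarrow> 'a set" where
  "below I lt A i = \<Union> (A ` {j\<in>I. lt j i})"

definition fs_seq :: "('r \<Rightarrow> 'a list set) \<Rightarrow> 'a set \<Rightarrow> 'i set \<Rightarrow> ('i \<Rightarrow> 'i \<Rightarrow> bool) \<Rightarrow> ('i \<Rightarrow> 'a set) \<Rightarrow> bool" where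
  "fs_seq Irel M I lt A \<longleftrightarrow> (\<forall>i\<in>I. fs Irel (A i) (below I lt A i \<union> M) M)"

end

theory Submission
  imports Defs
begin

primrec fvars :: "'r fm \<Rightarrow> nat set" where
  "fvars (Eq x y) = {x, y}"
| "fvars (Rel r xs) = set xs"
| "fvars (Neg \<phi>) = fvars \<phi>"
| "fvars (Conj \<phi> \<psi>) = fvars \<phi> \<union> fvars \<psi>"
| "fvars (Ex n \<phi>) = fvars \<phi> - {n}"

lemma finite_fvars: "finite (fvars \<phi>)"
  by (induct \<phi>) auto

lemma sat_fv: "(\<And>v. v \<in> fvars \<phi> \<Longrightarrow> e v = e' v) \<Longrightarrow> sat_in S R e \<phi> = sat_in S R e' \<phi>"
proof (induct \<phi> arbitrary: e e')
  case (Rel r xs)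
  have "map e xs = map e' xs" by (metis Rel.prems fvars.simps(2) map_eq_conv)
  then show ?case by (metis sat_in.simps(2))
next
  case (Ex n \<phi>)
  have "\<And>a. sat_in S R (e(n := a)) \<phi> = sat_in S R (e'(n := a)) \<phi>"
    by (rule Ex.hyps) (use Ex.prems in auto)
  then show ?case by simp
next
  case (Eq x y)
  then show ?case by simp
next
  case (Neg \<phi>)
  have "sat_in S R e \<phi> = sat_in S R e' \<phi>" by (rule Neg.hyps) (use Neg.prems in simp)
  then show ?case by simp
next
  case (Conj \<phi> \<psi>)
  have "sat_in S R e \<phi> = sat_in S R e' \<phi>" by (rule Conj.hyps(1)) (use Conj.prems in simp)
  moreover have "sat_in S R e \<psi> = sat_in S R e' \<psi>" by (rule Conj.hyps(2)) (use Conj.prems in simp)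
  ultimately show ?case by simp
qed

lemma fsE:
  assumes "fs R A B M" "\<forall>v\<in>set xs. e v \<in> A" "\<forall>v. v \<notin> set xs \<longrightarrow> e v \<in> B" "sat R e \<phi>"
  obtains e' where "\<forall>v\<in>set xs. e' v \<in> M" "\<forall>v. v \<notin> set xs \<longrightarrow> e' v = e v" "sat R e' \<phi>"
proof -
  have "\<exists>e'. (\<forall>v\<in>set xs. e' v \<in> M) \<and> (\<forall>v. v \<notin> set xs \<longrightarrow> e' v = e v) \<and> sat R e' \<phi>"
    using assms(1)[unfolded fs_def, rule_format, of xs e \<phi>] assms(2-4) by blast
  then show ?thesis using that by blast
qed

lemma fsI:
  assumes "\<And>\<phi> xs e. \<forall>v\<in>set xs. e v \<in> A \<Longrightarrow> \<forall>v. v \<notin> set xs \<longrightarrow> e v \<in> B \<Longrightarrow> sat R e \<phi> \<Longrightarrow>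
     \<exists>e'. (\<forall>v\<in>set xs. e' v \<in> M) \<and> (\<forall>v. v \<notin> set xs \<longrightarrow> e' v = e v) \<and> sat R e' \<phi>"
  shows "fs R A B M"
  unfolding fs_def
proof (intro allI impI, elim conjE)
  fix \<phi> xs e
  assume "\<forall>v\<in>set xs. e v \<in> A" "\<forall>v. v \<notin> set xs \<longrightarrow> e v \<in> B" "sat R e \<phi>"
  then show "\<exists>e'. (\<forall>v\<in>set xs. e' v \<in> M) \<and> (\<forall>v. v \<notin> set xs \<longrightarrow> e' v = e v) \<and> sat R e' \<phi>"
    by (rule assms)
qed

lemma fs_mono: assumes a: "fs R A B M" "A' \<subseteq> A" "B' \<subseteq> B" shows "fs R A' B' M"
proof (rule fsI)
  fix \<phi> xs e
  assume h: "\<forall>v\<in>set xs. e v \<in> A'" "\<forall>v. v \<notin> set xs \<longrightarrow> e v \<in> B'" "sat R e \<phi>"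
  have hA: "\<forall>v\<in>set xs. e v \<in> A" using h(1) a(2) by blast
  have hB: "\<forall>v. v \<notin> set xs \<longrightarrow> e v \<in> B" using h(2) a(3) by blast
  obtain e' where "\<forall>v\<in>set xs. e' v \<in> M" "\<forall>v. v \<notin> set xs \<longrightarrow> e' v = e v" "sat R e' \<phi>"
    by (rule fsE[OF a(1) hA hB h(3)])
  then show "\<exists>e'. (\<forall>v\<in>set xs. e' v \<in> M) \<and> (\<forall>v. v \<notin> set xs \<longrightarrow> e' v = e v) \<and> sat R e' \<phi>"
    by blast
qed


lemma fs_fin:
  assumes "M \<noteq> {}" "M \<subseteq> B"
    and H: "\<And>A0 B0. finite A0 \<Longrightarrow> A0 \<subseteq> A \<Longrightarrow> finite B0 \<Longrightarrow> B0 \<subseteq> B \<Longrightarrow> fs R A0 (M \<union> B0) M"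
  shows "fs R A B M"
proof (rule fsI)
  fix \<phi> xs e
  assume h1: "\<forall>v\<in>set xs. e v \<in> A" and h2: "\<forall>v. v \<notin> set xs \<longrightarrow> e v \<in> B" and h3: "sat R e \<phi>"
  obtain m0 where m0: "m0 \<in> M" using assms(1) by blast
  define A0 where "A0 = e ` set xs"
  define B0 where "B0 = e ` (fvars \<phi> - set xs)"
  have f1: "finite A0" by (simp add: A0_def)
  have f2: "A0 \<subseteq> A" using h1 by (auto simp: A0_def)
  have f3: "finite B0" unfolding B0_def by (rule finite_imageI) (simp add: finite_fvars)
  have f4: "B0 \<subseteq> B" using h2 by (auto simp: B0_def)
  have "fs R A0 (M \<union> B0) M" by (rule H[OF f1 f2 f3 f4])
  define e1 where "e1 = (\<lambda>v. if v \<in> set xs \<or> v \<in> fvars \<phi> then e v else m0)"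
  have s1: "sat R e1 \<phi>" using h3 sat_fv[of \<phi> e1 e] by (auto simp: e1_def)
  have a1: "\<forall>v\<in>set xs. e1 v \<in> A0" by (auto simp: e1_def A0_def)
  have a2: "\<forall>v. v \<notin> set xs \<longrightarrow> e1 v \<in> M \<union> B0" using m0 by (auto simp: e1_def B0_def)
  obtain e' where e': "\<forall>v\<in>set xs. e' v \<in> M" "\<forall>v. v \<notin> set xs \<longrightarrow> e' v = e1 v" "sat R e' \<phi>"
    using fsE[OF \<open>fs R A0 (M \<union> B0) M\<close> a1 a2 s1] by blast
  define e'' where "e'' = (\<lambda>v. if v \<in> set xs then e' v else e v)"
  have "sat R e'' \<phi>" using e'(3) sat_fv[of \<phi> e'' e'] e'(2) by (auto simp: e''_def e1_def)
  moreover have "\<forall>v\<in>set xs. e'' v \<in> M" "\<forall>v. v \<notin> set xs \<longrightarrow> e'' v = e v"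
    using e'(1) by (auto simp: e''_def)
  ultimately show "\<exists>e'. (\<forall>v\<in>set xs. e' v \<in> M) \<and> (\<forall>v. v \<notin> set xs \<longrightarrow> e' v = e v) \<and> sat R e' \<phi>"
    by blast
qed


primrec exs :: "nat list \<Rightarrow> 'r fm \<Rightarrow> 'r fm" where
  "exs [] \<phi> = \<phi>"
| "exs (x # xs) \<phi> = Ex x (exs xs \<phi>)"

lemma exs_sat: "sat_in S R e (exs xs \<phi>) \<longleftrightarrow>
  (\<exists>e'. (\<forall>v\<in>set xs. e' v \<in> S) \<and> (\<forall>v. v \<notin> set xs \<longrightarrow> e' v = e v) \<and> sat_in S R e' \<phi>)"
proof (induct xs arbitrary: e)
  case Nil
  have "\<And>e'. (\<forall>v. e' v = e v) \<longleftrightarrow> e' = e" by auto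
  then show ?case by simp
next
  case (Cons x xs)
  show ?case
  proof
    assume "sat_in S R e (exs (x # xs) \<phi>)"
    then obtain a where a: "a \<in> S" "sat_in S R (e(x := a)) (exs xs \<phi>)" by auto
    then obtain e' where e': "\<forall>v\<in>set xs. e' v \<in> S" "\<forall>v. v \<notin> set xs \<longrightarrow> e' v = (e(x := a)) v" "sat_in S R e' \<phi>"
      using Cons.hyps[of "e(x := a)"] a(2) by blast
    have "\<forall>v\<in>set (x # xs). e' v \<in> S" using e' a by (cases "x \<in> set xs") auto
    moreover have "\<forall>v. v \<notin> set (x # xs) \<longrightarrow> e' v = e v" using e' by auto
    ultimately show "\<exists>e'. (\<forall>v\<in>set (x # xs). e' v \<in> S) \<and> (\<forall>v. v \<notin> set (x # xs) \<longrightarrow> e' v = e v) \<and> sat_in S R e' \<phi>"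
      using e' by blast
  next
    assume "\<exists>e'. (\<forall>v\<in>set (x # xs). e' v \<in> S) \<and> (\<forall>v. v \<notin> set (x # xs) \<longrightarrow> e' v = e v) \<and> sat_in S R e' \<phi>"
    then obtain e' where e': "\<forall>v\<in>set (x # xs). e' v \<in> S" "\<forall>v. v \<notin> set (x # xs) \<longrightarrow> e' v = e v" "sat_in S R e' \<phi>"
      by blast
    have "\<forall>v. v \<notin> set xs \<longrightarrow> e' v = (e(x := e' x)) v" using e'(2) by auto
    moreover have "\<forall>v\<in>set xs. e' v \<in> S" using e'(1) by simp
    ultimately have "sat_in S R (e(x := e' x)) (exs xs \<phi>)" using Cons.hyps[of "e(x := e' x)"] e'(3) by blast
    then show "sat_in S R e (exs (x # xs) \<phi>)" using e'(1) by auto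
  qed
qed

lemma fs_elem:
  assumes "elem_sub R M"
  shows "fs R X M M"
proof (rule fsI)
  fix \<phi> xs e
  assume h1: "\<forall>v\<in>set xs. e v \<in> X" and h2: "\<forall>v. v \<notin> set xs \<longrightarrow> e v \<in> M" and h3: "sat R e \<phi>"
  have ne: "M \<noteq> {}" and el: "\<And>\<psi> e. (\<forall>v. e v \<in> M) \<Longrightarrow> sat_in M R e \<psi> = sat R e \<psi>"
    using assms unfolding elem_sub_def by blast+
  obtain m0 where m0: "m0 \<in> M" using ne by blast
  define e0 where "e0 = (\<lambda>v. if v \<in> set xs then m0 else e v)"
  have e0M: "\<forall>v. e0 v \<in> M" using m0 h2 by (auto simp: e0_def)
  have "sat R e0 (exs xs \<phi>)"
    unfolding exs_sat using h3 by (auto simp: e0_def intro!: exI[of _ e])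
  then have "sat_in M R e0 (exs xs \<phi>)" using el[OF e0M] by blast
  then obtain e' where e': "\<forall>v\<in>set xs. e' v \<in> M" "\<forall>v. v \<notin> set xs \<longrightarrow> e' v = e0 v" "sat_in M R e' \<phi>"
    unfolding exs_sat by blast
  have "\<forall>v. e' v \<in> M" using e' e0M by metis
  then have "sat R e' \<phi>" using el e'(3) by blast
  then show "\<exists>e'. (\<forall>v\<in>set xs. e' v \<in> M) \<and> (\<forall>v. v \<notin> set xs \<longrightarrow> e' v = e v) \<and> sat R e' \<phi>"
    using e' by (auto simp: e0_def)
qed


lemma fs_trans:
  assumes "M \<subseteq> B" "fs R C B M" "fs R X (B \<union> C) M"
  shows "fs R (X \<union> C) B M"
proof (rule fsI)
  fix \<phi> xs e
  assume h1: "\<forall>v\<in>set xs. e v \<in> X \<union> C" and h2: "\<forall>v. v \<notin> set xs \<longrightarrow> e v \<in> B" and h3: "sat R e \<phi>"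
  define xa where "xa = filter (\<lambda>v. e v \<in> X) xs"
  define xc where "xc = filter (\<lambda>v. e v \<notin> X) xs"
  have a1: "\<forall>v\<in>set xa. e v \<in> X" by (simp add: xa_def)
  have a2: "\<forall>v. v \<notin> set xa \<longrightarrow> e v \<in> B \<union> C" using h1 h2 by (auto simp: xa_def)
  obtain e1 where e1: "\<forall>v\<in>set xa. e1 v \<in> M" "\<forall>v. v \<notin> set xa \<longrightarrow> e1 v = e v" "sat R e1 \<phi>"
    using fsE[OF assms(3) a1 a2 h3] by blast
  have sxa: "\<And>v. v \<in> set xa \<longleftrightarrow> v \<in> set xs \<and> e v \<in> X" by (simp add: xa_def)
  have sxc: "\<And>v. v \<in> set xc \<longleftrightarrow> v \<in> set xs \<and> e v \<notin> X" by (simp add: xc_def)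
  have b1: "\<forall>v\<in>set xc. e1 v \<in> C"
  proof
    fix v assume v: "v \<in> set xc"
    then have "v \<notin> set xa" "v \<in> set xs" "e v \<notin> X" using sxa sxc by blast+
    then show "e1 v \<in> C" using e1(2) h1 by force
  qed
  have b2: "\<forall>v. v \<notin> set xc \<longrightarrow> e1 v \<in> B"
  proof (intro allI impI)
    fix v assume v: "v \<notin> set xc"
    show "e1 v \<in> B"
    proof (cases "v \<in> set xa")
      case True
      then show ?thesis using e1(1) assms(1) by blast
    next
      case False
      then have "v \<notin> set xs" using v sxa sxc by blast
      then show ?thesis using False e1(2) h2 by force
    qed
  qed
  obtain e2 where e2: "\<forall>v\<in>set xc. e2 v \<in> M" "\<forall>v. v \<notin> set xc \<longrightarrow> e2 v = e1 v" "sat R e2 \<phi>"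
    using fsE[OF assms(2) b1 b2 e1(3)] by blast
  have "e2 v \<in> M" if "v \<in> set xs" for v
  proof (cases "e v \<in> X")
    case True
    then have "v \<in> set xa" "v \<notin> set xc" using that sxa sxc by blast+
    then have "e2 v = e1 v" using e2(2) by blast
    then show ?thesis using e1(1) \<open>v \<in> set xa\<close> by simp
  next
    case False
    then have "v \<in> set xc" using that sxc by blast
    then show ?thesis using e2(1) by blast
  qed
  moreover have "e2 v = e v" if "v \<notin> set xs" for v
  proof -
    have "v \<notin> set xa" "v \<notin> set xc" using that sxa sxc by blast+
    then show ?thesis using e2(2) e1(2) by metis
  qed
  ultimately show "\<exists>e'. (\<forall>v\<in>set xs. e' v \<in> M) \<and> (\<forall>v. v \<notin> set xs \<longrightarrow> e' v = e v) \<and> sat R e' \<phi>"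
    using e2 by blast
qed


lemma dich_set:
  assumes "fs_dichotomy R K" "elem_sub R M" "small K M" "finite A0" "finite B0"
    "fs R A0 (M \<union> B0) M"
  shows "fs R A0 (M \<union> B0 \<union> {c}) M \<or> fs R (A0 \<union> {c}) (M \<union> B0) M"
proof -
  obtain bs where bs: "set bs = A0" using assms(4) finite_list by blast
  obtain as where as: "set as = B0" using assms(5) finite_list by blast
  show ?thesis using assms(1,2,3,6) unfolding fs_dichotomy_def bs[symmetric] as[symmetric] by blast
qed

lemma key_S:
  assumes "fs_dichotomy R K" "elem_sub R M" "small K M"
    "fs R X (B \<union> M) M" "\<not> fs R X (B \<union> M \<union> {c}) M"
  shows "fs R (X \<union> {c}) (B \<union> M) M"
proof -
  have ne: "M \<noteq> {}" using assms(2) unfolding elem_sub_def by blast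
  have "\<not> (\<forall>A0 B0. finite A0 \<longrightarrow> A0 \<subseteq> X \<longrightarrow> finite B0 \<longrightarrow> B0 \<subseteq> B \<union> M \<union> {c} \<longrightarrow> fs R A0 (M \<union> B0) M)"
  proof
    assume H: "\<forall>A0 B0. finite A0 \<longrightarrow> A0 \<subseteq> X \<longrightarrow> finite B0 \<longrightarrow> B0 \<subseteq> B \<union> M \<union> {c} \<longrightarrow> fs R A0 (M \<union> B0) M"
    have "fs R X (B \<union> M \<union> {c}) M"
      by (rule fs_fin[OF ne]) (use H in auto)
    then show False using assms(5) by blast
  qed
  then obtain A0 B0 where ab: "finite A0" "A0 \<subseteq> X" "finite B0" "B0 \<subseteq> B \<union> M \<union> {c}" "\<not> fs R A0 (M \<union> B0) M"
    by blast
  define B0' where "B0' = B0 - {c}"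
  have nf: "\<not> fs R A0 (M \<union> B0' \<union> {c}) M"
    using ab(5) fs_mono[of R A0 "M \<union> B0' \<union> {c}" M A0 "M \<union> B0"] by (auto simp: B0'_def)
  show ?thesis
  proof (rule fs_fin[OF ne])
    show "M \<subseteq> B \<union> M" by blast
  next
    fix A1 B1 assume h: "finite A1" "A1 \<subseteq> X \<union> {c}" "finite B1" "B1 \<subseteq> B \<union> M"
    define A2 where "A2 = (A1 - {c}) \<union> A0"
    define B2 where "B2 = B1 \<union> B0'"
    have f: "finite A2" "finite B2" using h ab by (auto simp: A2_def B2_def B0'_def)
    have "fs R A2 (M \<union> B2) M"
      by (rule fs_mono[OF assms(4)]) (use h ab in \<open>auto simp: A2_def B2_def B0'_def\<close>)
    from dich_set[OF assms(1,2,3) f this, of c]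
    show "fs R A1 (M \<union> B1) M"
    proof
      assume "fs R A2 (M \<union> B2 \<union> {c}) M"
      then have "fs R A0 (M \<union> B0' \<union> {c}) M"
        by (rule fs_mono) (auto simp: A2_def B2_def)
      then show ?thesis using nf by blast
    next
      assume "fs R (A2 \<union> {c}) (M \<union> B2) M"
      then show ?thesis by (rule fs_mono) (auto simp: A2_def B2_def)
    qed
  qed
qed



lemma slo_D:
  assumes "strict_linear_on I lt"
  shows "\<And>i. i \<in> I \<Longrightarrow> \<not> lt i i"
    and "\<And>i j k. i \<in> I \<Longrightarrow> j \<in> I \<Longrightarrow> k \<in> I \<Longrightarrow> lt i j \<Longrightarrow> lt j k \<Longrightarrow> lt i k"
    and "\<And>i j. i \<in> I \<Longrightarrow> j \<in> I \<Longrightarrow> lt i j \<or> i = j \<or> lt j i"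
  using assms unfolding strict_linear_on_def by blast+

lemma insert_c:
  assumes slo: "strict_linear_on I lt" and seq: "fs_seq R M I lt A" and i1: "i1 \<in> I"
    and h1: "fs R (A i1 \<union> {c}) (below I lt A i1 \<union> M) M"
    and h2: "\<forall>i\<in>I. lt i1 i \<longrightarrow> fs R (A i) (below I lt A i \<union> M \<union> {c}) M"
  shows "fs_seq R M I lt (A(i1 := A i1 \<union> {c}))"
proof -
  note L = slo_D[OF slo]
  have bel: "below I lt (A(i1 := A i1 \<union> {c})) i = (if lt i1 i then below I lt A i \<union> {c} else below I lt A i)" for i
    using i1 unfolding below_def by auto
  show ?thesis unfolding fs_seq_def
  proof
    fix i assume i: "i \<in> I"
    consider "lt i1 i" | "i = i1" | "lt i i1" using L(3)[OF i1 i] by blast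
    then show "fs R ((A(i1 := A i1 \<union> {c})) i) (below I lt (A(i1 := A i1 \<union> {c})) i \<union> M) M"
    proof cases
      case 1
      then have "i \<noteq> i1" using L(1)[OF i] by blast
      have "fs R (A i) (below I lt A i \<union> M \<union> {c}) M" using h2 i 1 by blast
      then show ?thesis using 1 \<open>i \<noteq> i1\<close> unfolding bel by (auto elim: fs_mono)
    next
      case 2
      then show ?thesis using h1 L(1)[OF i1] unfolding bel by simp
    next
      case 3
      then have "i \<noteq> i1" "\<not> lt i1 i" using L(1)[OF i] L(2)[OF i i1 i] by blast+
      moreover have "fs R (A i) (below I lt A i \<union> M) M" using seq i unfolding fs_seq_def by blast
      ultimately show ?thesis unfolding bel by simp
    qed
  qed
qed

lemma to_option:
  assumes slo: "strict_linear_on I lt" and seq: "fs_seq R M I lt A"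
  shows "strict_linear_on (Some ` I) (\<lambda>x y. lt (the x) (the y))"
    and "fs_seq R M (Some ` I) (\<lambda>x y. lt (the x) (the y)) (\<lambda>x. A (the x))"
proof -
  show "strict_linear_on (Some ` I) (\<lambda>x y. lt (the x) (the y))"
    unfolding strict_linear_on_def
  proof (intro conjI ballI impI)
    fix x assume "x \<in> Some ` I"
    then obtain a where "a \<in> I" "x = Some a" by blast
    then show "\<not> lt (the x) (the x)" using slo_D(1)[OF slo] by simp
  next
    fix x y z assume "x \<in> Some ` I" "y \<in> Some ` I" "z \<in> Some ` I" "lt (the x) (the y) \<and> lt (the y) (the z)"
    then obtain a b d where abd: "a \<in> I" "b \<in> I" "d \<in> I" "x = Some a" "y = Some b" "z = Some d"
      "lt a b" "lt b d" by auto
    then have "lt a d" using slo_D(2)[OF slo, of a b d] by blast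
    then show "lt (the x) (the z)" using abd by simp
  next
    fix x y assume xy: "x \<in> Some ` I" "y \<in> Some ` I"
    then obtain a b where "a \<in> I" "b \<in> I" "x = Some a" "y = Some b" by blast
    then show "lt (the x) (the y) \<or> x = y \<or> lt (the y) (the x)" using slo_D(3)[OF slo] by auto
  qed
  have bel: "below (Some ` I) (\<lambda>x y. lt (the x) (the y)) (\<lambda>x. A (the x)) (Some i) = below I lt A i" for i
    unfolding below_def by auto
  show "fs_seq R M (Some ` I) (\<lambda>x y. lt (the x) (the y)) (\<lambda>x. A (the x))"
    unfolding fs_seq_def
  proof
    fix x assume "x \<in> Some ` I"
    then obtain i where i: "i \<in> I" "x = Some i" by blast
    have "fs R (A i) (below I lt A i \<union> M) M" using seq i unfolding fs_seq_def by blast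
    then show "fs R (A (the x)) (below (Some ` I) (\<lambda>x y. lt (the x) (the y)) (\<lambda>x. A (the x)) x \<union> M) M"
      using i bel by simp
  qed
qed

definition ltD :: "('i \<Rightarrow> 'i \<Rightarrow> bool) \<Rightarrow> 'i set \<Rightarrow> 'i option \<Rightarrow> 'i option \<Rightarrow> bool" where
  "ltD lt D x y = (case x of None \<Rightarrow> (case y of None \<Rightarrow> False | Some b \<Rightarrow> b \<notin> D)
                             | Some a \<Rightarrow> (case y of None \<Rightarrow> a \<in> D | Some b \<Rightarrow> lt a b))"

definition AD :: "('i \<Rightarrow> 'a set) \<Rightarrow> 'a \<Rightarrow> 'i option \<Rightarrow> 'a set" where
  "AD A c x = (case x of None \<Rightarrow> {c} | Some a \<Rightarrow> A a)"

lemma ltD_simps[simp]: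
  "ltD lt D (Some a) (Some b) = lt a b" "ltD lt D (Some a) None = (a \<in> D)"
  "ltD lt D None (Some b) = (b \<notin> D)" "ltD lt D None None = False"
  by (simp_all add: ltD_def)

lemma AD_simps[simp]: "AD A c None = {c}" "AD A c (Some a) = A a"
  by (simp_all add: AD_def)

lemma cut_ext:
  assumes slo: "strict_linear_on I lt" and seq: "fs_seq R M I lt A"
    and DI: "D \<subseteq> I" and down: "\<forall>j\<in>I. \<forall>k\<in>D. lt j k \<longrightarrow> j \<in> D"
    and hc: "fs R {c} (\<Union>(A ` D) \<union> M) M"
    and hr: "\<forall>i\<in>I - D. fs R (A i) (below I lt A i \<union> M \<union> {c}) M"
  shows "strict_linear_on (insert None (Some ` I)) (ltD lt D)"
    and "fs_seq R M (insert None (Some ` I)) (ltD lt D) (AD A c)"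
proof -
  note L = slo_D[OF slo]
  show "strict_linear_on (insert None (Some ` I)) (ltD lt D)"
    unfolding strict_linear_on_def
  proof (intro conjI ballI impI)
    fix x assume "x \<in> insert None (Some ` I)"
    then show "\<not> ltD lt D x x" using L(1) by auto
  next
    fix x y z assume xyz: "x \<in> insert None (Some ` I)" "y \<in> insert None (Some ` I)" "z \<in> insert None (Some ` I)"
      and h: "ltD lt D x y \<and> ltD lt D y z"
    show "ltD lt D x z"
    proof (cases x)
      case None
      then show ?thesis using xyz h down by (cases y; cases z) (auto dest: L(2))
    next
      case (Some a)
      then show ?thesis using xyz h down DI
        by (cases y; cases z) (auto dest: L(2), metis L(3) subsetD)
    qed
  next
    fix x y assume xy: "x \<in> insert None (Some ` I)" "y \<in> insert None (Some ` I)"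
    then show "ltD lt D x y \<or> x = y \<or> ltD lt D y x"
      using L(3) by (cases x; cases y) auto
  qed
  have belN: "below (insert None (Some ` I)) (ltD lt D) (AD A c) None = \<Union>(A ` D)"
  proof -
    have "{x \<in> insert None (Some ` I). ltD lt D x None} = Some ` D" using DI by (auto simp: ltD_def split: option.splits)
    then show ?thesis unfolding below_def by (simp add: image_image)
  qed
  have belS: "below (insert None (Some ` I)) (ltD lt D) (AD A c) (Some i) =
      (if i \<in> D then below I lt A i else below I lt A i \<union> {c})" if "i \<in> I" for i
    unfolding below_def using that down by auto
  show "fs_seq R M (insert None (Some ` I)) (ltD lt D) (AD A c)"
    unfolding fs_seq_def
  proof
    fix x assume x: "x \<in> insert None (Some ` I)"
    show "fs R (AD A c x) (below (insert None (Some ` I)) (ltD lt D) (AD A c) x \<union> M) M"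
    proof (cases x)
      case None
      then show ?thesis using hc belN by simp
    next
      case (Some i)
      then have i: "i \<in> I" using x by auto
      show ?thesis
      proof (cases "i \<in> D")
        case True
        moreover have "fs R (A i) (below I lt A i \<union> M) M" using seq i unfolding fs_seq_def by blast
        ultimately show ?thesis using Some belS[OF i] by simp
      next
        case False
        then have "fs R (A i) (below I lt A i \<union> M \<union> {c}) M" using hr i by blast
        then show ?thesis using Some belS[OF i] False by (auto elim: fs_mono)
      qed
    qed
  qed
qed



lemma chain_lemma:
  assumes slo: "strict_linear_on I lt" and el: "elem_sub R M" and SI: "S \<subseteq> I"
    and nomax: "\<forall>s\<in>S. \<exists>k\<in>S. lt s k"
    and keyS: "\<forall>s\<in>S. fs R (A s \<union> {c}) (below I lt A s \<union> M) M"
    and Ddef: "D = {j\<in>I. \<exists>s\<in>S. j = s \<or> lt j s}"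
  shows "fs R {c} (\<Union>(A ` D) \<union> M) M"
proof -
  note L = slo_D[OF slo]
  have ne: "M \<noteq> {}" using el unfolding elem_sub_def by blast
  show ?thesis
  proof (rule fs_fin[OF ne])
    show "M \<subseteq> \<Union>(A ` D) \<union> M" by blast
  next
    fix A0 B0 assume h: "finite A0" "A0 \<subseteq> {c}" "finite B0" "B0 \<subseteq> \<Union>(A ` D) \<union> M"
    show "fs R A0 (M \<union> B0) M"
    proof (cases "S = {}")
      case True
      then have "B0 \<subseteq> M" using h(4) Ddef by auto
      moreover have "fs R {c} M M" by (rule fs_elem[OF el])
      ultimately show ?thesis using h(2) by (auto elim: fs_mono)
    next
      case False
      have "\<exists>s\<in>S. B0 \<subseteq> below I lt A s \<union> M" using h(3,4)
      proof (induct B0 rule: finite_induct)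
        case empty
        then show ?case using False by blast
      next
        case (insert x F)
        then obtain s where s: "s \<in> S" "F \<subseteq> below I lt A s \<union> M" by blast
        have sI: "s \<in> I" using s SI by blast
        show ?case
        proof (cases "x \<in> M")
          case True
          then show ?thesis using s by blast
        next
          case False
          then obtain j where j: "j \<in> D" "x \<in> A j" using insert.prems by blast
          then obtain s' where s': "s' \<in> S" "j = s' \<or> lt j s'" "j \<in> I" using Ddef by blast
          have s'I: "s' \<in> I" using s' SI by blast
          obtain t where t: "t \<in> S" "s = t \<or> lt s t" "s' = t \<or> lt s' t"
            using L(3)[OF sI s'I] s s' by blast
          have tI: "t \<in> I" using t SI by blast
          obtain k where k: "k \<in> S" "lt t k" using nomax t by blast
          have kI: "k \<in> I" using k SI by blast
          have sk: "lt s k" using t(2) k L(2)[OF sI tI kI] by blast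
          have s'k: "lt s' k" using t(3) k L(2)[OF s'I tI kI] by blast
          have jk: "lt j k" using s'(2) s'k L(2)[OF s'(3) s'I kI] by blast
          have "below I lt A s \<subseteq> below I lt A k"
            unfolding below_def using L(2)[OF _ sI kI] sk by blast
          moreover have "A j \<subseteq> below I lt A k" unfolding below_def using jk s'(3) by blast
          ultimately have "insert x F \<subseteq> below I lt A k \<union> M" using s(2) j by blast
          then show ?thesis using k by blast
        qed
      qed
      then obtain s where s: "s \<in> S" "B0 \<subseteq> below I lt A s \<union> M" by blast
      have "fs R (A s \<union> {c}) (below I lt A s \<union> M) M" using keyS s by blast
      then show ?thesis by (rule fs_mono) (use h s in auto)
    qed
  qed
qed



theorem lemma3:
  fixes Irel :: "'r \<Rightarrow> 'a list set" and K :: "'k set" and M :: "'a set"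
    and I :: "'i set" and lt :: "'i \<Rightarrow> 'i \<Rightarrow> bool" and A :: "'i \<Rightarrow> 'a set" and c :: 'a
  assumes "monster Irel K"
    and "fs_dichotomy Irel K"
    and "elem_sub Irel M" and "small K M"
    and "strict_linear_on I lt"
    and "fs_seq Irel M I lt A"
  shows "(\<exists>(J :: 'i option set) ltJ A'.
            strict_linear_on J ltJ \<and> Some ` I \<subseteq> J \<and>
            (\<forall>i\<in>I. \<forall>j\<in>I. ltJ (Some i) (Some j) \<longleftrightarrow> lt i j) \<and>
            (\<forall>i\<in>I. A i \<subseteq> A' (Some i)) \<and>
            fs_seq Irel M J ltJ A' \<and> c \<in> \<Union> (A' ` J))
       \<and> (well_order_with_max I lt \<longrightarrow>
            (\<exists>A'. (\<forall>i\<in>I. A i \<subseteq> A' i) \<and> fs_seq Irel M I lt A' \<and> c \<in> \<Union> (A' ` I)))"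
proof -
  note slo = assms(5) and seq = assms(6)
  note L = slo_D[OF slo]
  define S where "S = {i\<in>I. \<not> fs Irel (A i) (below I lt A i \<union> M \<union> {c}) M}"
  have SI: "S \<subseteq> I" by (auto simp: S_def)
  have seqI: "fs Irel (A i) (below I lt A i \<union> M) M" if "i \<in> I" for i
    using seq that unfolding fs_seq_def by blast
  have keyS: "fs Irel (A i \<union> {c}) (below I lt A i \<union> M) M" if "i \<in> S" for i
  proof -
    have "i \<in> I" "\<not> fs Irel (A i) (below I lt A i \<union> M \<union> {c}) M" using that by (auto simp: S_def)
    then show ?thesis using key_S[OF assms(2,3,4) seqI] by blast
  qed
  have notS: "fs Irel (A i) (below I lt A i \<union> M \<union> {c}) M" if "i \<in> I" "i \<notin> S" for i
    using that by (auto simp: S_def)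
  consider (max) i0 where "i0 \<in> S" "\<forall>s\<in>S. \<not> lt i0 s" | (nomax) "\<forall>s\<in>S. \<exists>k\<in>S. lt s k" by blast
  then show ?thesis
  proof cases
    case max
    have i0I: "i0 \<in> I" using max SI by blast
    define A' where "A' = A(i0 := A i0 \<union> {c})"
    have seq': "fs_seq Irel M I lt A'" unfolding A'_def
    proof (rule insert_c[OF slo seq i0I keyS[OF max(1)]])
      show "\<forall>i\<in>I. lt i0 i \<longrightarrow> fs Irel (A i) (below I lt A i \<union> M \<union> {c}) M"
        using max notS by blast
    qed
    have sub: "\<forall>i\<in>I. A i \<subseteq> A' i" by (auto simp: A'_def)
    have cin: "c \<in> A' i0" by (simp add: A'_def)
    have P1: "\<exists>(J :: 'i option set) ltJ A'.
            strict_linear_on J ltJ \<and> Some ` I \<subseteq> J \<and>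
            (\<forall>i\<in>I. \<forall>j\<in>I. ltJ (Some i) (Some j) \<longleftrightarrow> lt i j) \<and>
            (\<forall>i\<in>I. A i \<subseteq> A' (Some i)) \<and>
            fs_seq Irel M J ltJ A' \<and> c \<in> \<Union> (A' ` J)"
    proof (intro exI conjI)
      show "strict_linear_on (Some ` I) (\<lambda>x y. lt (the x) (the y))" by (rule to_option(1)[OF slo seq'])
      show "fs_seq Irel M (Some ` I) (\<lambda>x y. lt (the x) (the y)) (\<lambda>x. A' (the x))" by (rule to_option(2)[OF slo seq'])
      show "Some ` I \<subseteq> Some ` I" by blast
      show "\<forall>i\<in>I. \<forall>j\<in>I. lt (the (Some i)) (the (Some j)) = lt i j" by simp
      show "\<forall>i\<in>I. A i \<subseteq> A' (the (Some i))" using sub by simp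
      show "c \<in> \<Union> ((\<lambda>x. A' (the x)) ` Some ` I)" using cin i0I by auto
    qed
    moreover have "\<exists>A'. (\<forall>i\<in>I. A i \<subseteq> A' i) \<and> fs_seq Irel M I lt A' \<and> c \<in> \<Union> (A' ` I)"
      using sub seq' cin i0I by blast
    ultimately show ?thesis by blast
  next
    case nomax
    define D where "D = {j\<in>I. \<exists>s\<in>S. j = s \<or> lt j s}"
    have DI: "D \<subseteq> I" by (auto simp: D_def)
    have SD: "S \<subseteq> D" using SI by (auto simp: D_def)
    have down: "\<forall>j\<in>I. \<forall>k\<in>D. lt j k \<longrightarrow> j \<in> D"
    proof (intro ballI impI)
      fix j k assume j: "j \<in> I" and k: "k \<in> D" and jk: "lt j k"
      then obtain s where s: "s \<in> S" "k = s \<or> lt k s" "k \<in> I" by (auto simp: D_def)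
      have "s \<in> I" using s SI by blast
      then have "lt j s" using s jk L(2)[OF j s(3)] by blast
      then show "j \<in> D" using j s by (auto simp: D_def)
    qed
    have hc: "fs Irel {c} (\<Union>(A ` D) \<union> M) M"
      by (rule chain_lemma[OF slo assms(3) SI nomax _ D_def]) (use keyS in blast)
    have hr: "\<forall>i\<in>I - D. fs Irel (A i) (below I lt A i \<union> M \<union> {c}) M"
      using notS SD by blast
    have P1: "\<exists>(J :: 'i option set) ltJ A'.
            strict_linear_on J ltJ \<and> Some ` I \<subseteq> J \<and>
            (\<forall>i\<in>I. \<forall>j\<in>I. ltJ (Some i) (Some j) \<longleftrightarrow> lt i j) \<and>
            (\<forall>i\<in>I. A i \<subseteq> A' (Some i)) \<and>
            fs_seq Irel M J ltJ A' \<and> c \<in> \<Union> (A' ` J)"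
    proof (intro exI conjI)
      show "strict_linear_on (insert None (Some ` I)) (ltD lt D)" by (rule cut_ext(1)[OF slo seq DI down hc hr])
      show "fs_seq Irel M (insert None (Some ` I)) (ltD lt D) (AD A c)" by (rule cut_ext(2)[OF slo seq DI down hc hr])
      show "Some ` I \<subseteq> insert None (Some ` I)" by blast
      show "\<forall>i\<in>I. \<forall>j\<in>I. ltD lt D (Some i) (Some j) = lt i j" by simp
      show "\<forall>i\<in>I. A i \<subseteq> AD A c (Some i)" by simp
      show "c \<in> \<Union> (AD A c ` insert None (Some ` I))" by simp
    qed
    moreover have "\<exists>A'. (\<forall>i\<in>I. A i \<subseteq> A' i) \<and> fs_seq Irel M I lt A' \<and> c \<in> \<Union> (A' ` I)"
      if wo: "well_order_with_max I lt"
    proof -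
      obtain m where m: "m \<in> I" "\<forall>i\<in>I. i \<noteq> m \<longrightarrow> lt i m" using wo unfolding well_order_with_max_def by blast
      have mD: "m \<notin> D"
      proof
        assume "m \<in> D"
        then obtain s where s: "s \<in> S" "m = s \<or> lt m s" by (auto simp: D_def)
        have sI: "s \<in> I" using s SI by blast
        have "m = s"
        proof (rule ccontr)
          assume "m \<noteq> s"
          then have "lt s m" "lt m s" using m sI s by auto
          then show False using L(1)[OF m(1)] L(2)[OF m(1) sI m(1)] by blast
        qed
        then obtain k where "k \<in> S" "lt m k" using nomax s by blast
        moreover have "k \<in> I" using \<open>k \<in> S\<close> SI by blast
        ultimately show False using m L(1)[OF m(1)] L(2)[OF m(1) _ m(1)] by (metis L(1))
      qed
      have "I - D \<subseteq> I" "I - D \<noteq> {}" using m mD by auto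
      then obtain i1 where i1: "i1 \<in> I - D" "\<forall>s\<in>I - D. \<not> lt s i1"
        using wo unfolding well_order_with_max_def by blast
      have i1I: "i1 \<in> I" using i1 by blast
      have below_eq: "{j\<in>I. lt j i1} = D"
      proof
        show "{j\<in>I. lt j i1} \<subseteq> D" using i1 by blast
        show "D \<subseteq> {j\<in>I. lt j i1}"
        proof
          fix j assume j: "j \<in> D"
          then have jI: "j \<in> I" using DI by blast
          have "j \<noteq> i1" using j i1 by blast
          moreover have "\<not> lt i1 j" using down j i1 jI by blast
          ultimately have "lt j i1" using L(3)[OF jI i1I] by blast
          then show "j \<in> {j\<in>I. lt j i1}" using jI by blast
        qed
      qed
      have bel1: "below I lt A i1 = \<Union>(A ` D)" unfolding below_def below_eq ..
      have h1: "fs Irel (A i1 \<union> {c}) (below I lt A i1 \<union> M) M"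
      proof (rule fs_trans)
        show "M \<subseteq> below I lt A i1 \<union> M" by blast
        show "fs Irel {c} (below I lt A i1 \<union> M) M" using hc bel1 by simp
        show "fs Irel (A i1) (below I lt A i1 \<union> M \<union> {c}) M" using hr i1 by blast
      qed
      have h2: "\<forall>i\<in>I. lt i1 i \<longrightarrow> fs Irel (A i) (below I lt A i \<union> M \<union> {c}) M"
      proof (intro ballI impI)
        fix i assume i: "i \<in> I" "lt i1 i"
        have "i \<notin> D" using down i i1 by blast
        then show "fs Irel (A i) (below I lt A i \<union> M \<union> {c}) M" using hr i by blast
      qed
      define A' where "A' = A(i1 := A i1 \<union> {c})"
      have seq': "fs_seq Irel M I lt A'" unfolding A'_def by (rule insert_c[OF slo seq i1I h1 h2])
      have "\<forall>i\<in>I. A i \<subseteq> A' i" by (auto simp: A'_def)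
      moreover have "c \<in> \<Union> (A' ` I)" using i1I by (auto simp: A'_def)
      ultimately show ?thesis using seq' by blast
    qed
    ultimately show ?thesis by blast
  qed
qed


end
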